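(* Let $\theta_0\in\mathbb{R}$, let $\hat\theta_u$ and $\hat\theta_b'$ be real random variables with finite second moments such that $\mathbb{E}[\hat\theta_u]=\theta_0$ and $\mathbb{E}[\hat\theta_b']=\theta_0$, and let $(\mu_k)_{k\ge1}$ be a sequence of real numbers with $\mu_k\to\infty$ as $k\to\infty$. Define $\hat\theta_b^{(k)}=\hat\theta_b'+\mu_k$, so that $\mathrm{Var}(\hat\theta_b^{(k)})=\sigma^2_b:=\mathrm{Var}(\hat\theta_b')$ and $\mathrm{Cov}(\hat\theta_b^{(k)},\hat\theta_u)=\sigma_{bu}:=\mathrm{Cov}(\hat\theta_b',\hat\theta_u)$ for all $k$. Let $\sigma^2_u=\mathrm{Var}(\hat\theta_u)$ and assume $\sigma^2_u>0$ and $\sigma^2_u+\sigma^2_b-2\sigma_{bu}>0$. For each $k$ define $$\hat\lambda^{(k)}=\frac{\sigma^2_u-\sigma_{bu}}{(\hat\theta_u-\hat\theta_b^{(k)})^2+\sigma^2_u+\sigma^2_b-2\sigma_{bu}},\qquad \hat\theta_{\hat\lambda}^{(k)}=\hat\lambda^{(k)}\hat\theta_b^{(k)}+(1-\hat\lambda^{(k)})\hat\theta_u .$$ Then $$\lim_{k\to\infty}\mathbb{E}\big[(\hat\theta_{\hat\lambda}^{(k)}-\theta_0)^2\big]=\sigma^2_u .$$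
   Context: $\hat\theta_u$ is an unbiased estimator of $\theta_0$, and $\hat\theta_b^{(k)}$ is a biased estimator with bias $\mu_k$; $\hat\theta_{\hat\lambda}^{(k)}$ is the combination estimator formed with known variances and covariance. *)

theory Defs
  imports "HOL-Probability.Probability"
begin

definition covariance :: "'a measure \<Rightarrow> ('a \<Rightarrow> real) \<Rightarrow> ('a \<Rightarrow> real) \<Rightarrow> real" where
  "covariance M X Y = integral\<^sup>L M (\<lambda>x. (X x - integral\<^sup>L M X) * (Y x - integral\<^sup>L M Y))"

end

theory Submission
  imports Defs
begin

lemma frac_bound:
  fixes t s :: real assumes s: "s > 0"
  shows "\<bar>t / (t\<^sup>2 + s)\<bar> \<le> 1 / s + 1"
proof (cases "\<bar>t\<bar> \<le> 1")
  case True
  have pos: "t\<^sup>2 + s > 0" using s by (simp add: add_nonneg_pos)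
  have "\<bar>t / (t\<^sup>2 + s)\<bar> = \<bar>t\<bar> / (t\<^sup>2 + s)" using pos by simp
  also have "\<dots> \<le> 1 / (t\<^sup>2 + s)" using True pos by (simp add: divide_right_mono)
  also have "\<dots> \<le> 1 / s" using s by (simp add: frac_le)
  finally show ?thesis by simp
next
  case False
  have pos: "t\<^sup>2 + s > 0" using s by (simp add: add_nonneg_pos)
  have "\<bar>t\<bar> * 1 \<le> \<bar>t\<bar> * \<bar>t\<bar>" using False by (intro mult_left_mono) auto
  hence "\<bar>t\<bar> \<le> t\<^sup>2" by (simp add: power2_eq_square)
  hence "\<bar>t\<bar> \<le> t\<^sup>2 + s" using s by linarith
  hence "\<bar>t\<bar> / (t\<^sup>2 + s) \<le> 1" using pos by simp
  moreover have "1 / s \<ge> 0" using s by simp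
  moreover have "\<bar>t / (t\<^sup>2 + s)\<bar> = \<bar>t\<bar> / (t\<^sup>2 + s)" using pos by simp
  ultimately show ?thesis by linarith
qed

lemma frac_lim:
  fixes s :: real assumes s: "s > 0"
  shows "((\<lambda>t. t / (t\<^sup>2 + s)) \<longlongrightarrow> 0) at_top"
proof (rule Lim_null_comparison)
  show "\<forall>\<^sub>F t in at_top. norm (t / (t\<^sup>2 + s)) \<le> inverse t"
    using eventually_gt_at_top[of 0]
  proof eventually_elim
    case (elim t)
    have pos: "t\<^sup>2 + s > 0" using s by (simp add: add_nonneg_pos)
    have "t / (t\<^sup>2 + s) \<le> t / t\<^sup>2" using elim s pos
      by (intro divide_left_mono) auto
    also have "\<dots> = inverse t" using elim by (simp add: power2_eq_square field_simps)
    finally show ?case using elim pos by simp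
  qed
  show "((\<lambda>t::real. inverse t) \<longlongrightarrow> 0) at_top" using tendsto_inverse_0_at_top[OF filterlim_ident] by simp
qed

lemma sq_ineq: "(a - b)\<^sup>2 \<le> 2 * a\<^sup>2 + 2 * (b::real)\<^sup>2"
proof -
  have "(a - b)\<^sup>2 = 2 * a\<^sup>2 + 2 * b\<^sup>2 - (a + b)\<^sup>2" by (simp add: power2_eq_square algebra_simps)
  moreover have "0 \<le> (a + b)\<^sup>2" by simp
  ultimately show ?thesis by linarith
qed

lemma sq_abs_le: "\<bar>a\<bar> \<le> (B::real) \<Longrightarrow> a\<^sup>2 \<le> B\<^sup>2"
  by (metis abs_le_square_iff abs_of_nonneg abs_ge_zero order_trans)

theorem proposition1:
  fixes M :: "'a measure" and \<theta>\<^sub>0 :: real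
    and Tu Tb' :: "'a \<Rightarrow> real" and \<mu> :: "nat \<Rightarrow> real"
  defines "Tb \<equiv> (\<lambda>k x. Tb' x + \<mu> k)"
    and "\<sigma>u2 \<equiv> prob_space.variance M Tu"
    and "\<sigma>b2 \<equiv> prob_space.variance M Tb'"
    and "\<sigma>bu \<equiv> covariance M Tb' Tu"
  assumes "prob_space M"
    and "Tu \<in> borel_measurable M" and "Tb' \<in> borel_measurable M"
    and "integrable M (\<lambda>x. (Tu x)\<^sup>2)" and "integrable M (\<lambda>x. (Tb' x)\<^sup>2)"
    and "integral\<^sup>L M Tu = \<theta>\<^sub>0" and "integral\<^sup>L M Tb' = \<theta>\<^sub>0"
    and "filterlim \<mu> at_top sequentially"
    and "\<sigma>u2 > 0" and "\<sigma>u2 + \<sigma>b2 - 2 * \<sigma>bu > 0"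
  shows "(\<lambda>k. integral\<^sup>L M (\<lambda>x.
            (let lam = (\<sigma>u2 - \<sigma>bu) / ((Tu x - Tb k x)\<^sup>2 + \<sigma>u2 + \<sigma>b2 - 2 * \<sigma>bu)
             in (lam * Tb k x + (1 - lam) * Tu x - \<theta>\<^sub>0)\<^sup>2)))
         \<longlonglongrightarrow> \<sigma>u2"
proof -
  interpret P: prob_space M by fact
  note meas[measurable] = assms(6,7)
  define c where "c = \<sigma>u2 - \<sigma>bu"
  define s where "s = \<sigma>u2 + \<sigma>b2 - 2 * \<sigma>bu"
  define B where "B = \<bar>c\<bar> * (1 / s + 1)"
  have s: "s > 0" using assms(14) s_def by simp
  define h where "h = (\<lambda>k x. c * ((Tu x - Tb' x - \<mu> k) / ((Tu x - Tb' x - \<mu> k)\<^sup>2 + s)))"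
  define f where "f = (\<lambda>k x. (Tu x - \<theta>\<^sub>0 - h k x)\<^sup>2)"
  have eq: "(let lam = (\<sigma>u2 - \<sigma>bu) / ((Tu x - Tb k x)\<^sup>2 + \<sigma>u2 + \<sigma>b2 - 2 * \<sigma>bu)
             in (lam * Tb k x + (1 - lam) * Tu x - \<theta>\<^sub>0)\<^sup>2) = f k x" for k x
  proof -
    have d: "Tu x - Tb k x = Tu x - Tb' x - \<mu> k" unfolding Tb_def by simp
    have den: "(Tu x - Tb k x)\<^sup>2 + \<sigma>u2 + \<sigma>b2 - 2 * \<sigma>bu = (Tu x - Tb' x - \<mu> k)\<^sup>2 + s"
      unfolding s_def d by simp
    define lam where "lam = c / ((Tu x - Tb' x - \<mu> k)\<^sup>2 + s)"
    have "lam * Tb k x + (1 - lam) * Tu x - \<theta>\<^sub>0 = Tu x - \<theta>\<^sub>0 - lam * (Tu x - Tb k x)"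
      by (simp add: algebra_simps)
    also have "\<dots> = Tu x - \<theta>\<^sub>0 - h k x" unfolding h_def lam_def d by simp
    finally have e: "lam * Tb k x + (1 - lam) * Tu x - \<theta>\<^sub>0 = Tu x - \<theta>\<^sub>0 - h k x" .
    show ?thesis unfolding Let_def den c_def[symmetric] lam_def[symmetric] f_def e ..
  qed
  have hb: "\<bar>h k x\<bar> \<le> B" for k x
    unfolding h_def B_def abs_mult by (intro mult_left_mono frac_bound s) auto
  have intTu: "integrable M Tu" by (rule P.square_integrable_imp_integrable) (use assms(8) in auto)
  have intsq: "integrable M (\<lambda>x. (Tu x - \<theta>\<^sub>0)\<^sup>2)"
    using intTu assms(8) by (simp add: power2_diff)
  have "(\<lambda>k. integral\<^sup>L M (f k)) \<longlonglongrightarrow> integral\<^sup>L M (\<lambda>x. (Tu x - \<theta>\<^sub>0)\<^sup>2)"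
  proof (rule integral_dominated_convergence[where w="\<lambda>x. 2 * (Tu x - \<theta>\<^sub>0)\<^sup>2 + 2 * B\<^sup>2"])
    show "(\<lambda>x. (Tu x - \<theta>\<^sub>0)\<^sup>2) \<in> borel_measurable M" by measurable
    show "f k \<in> borel_measurable M" for k unfolding f_def h_def by measurable
    show "integrable M (\<lambda>x. 2 * (Tu x - \<theta>\<^sub>0)\<^sup>2 + 2 * B\<^sup>2)" using intsq by simp
    show "AE x in M. norm (f k x) \<le> 2 * (Tu x - \<theta>\<^sub>0)\<^sup>2 + 2 * B\<^sup>2" for k
    proof (intro AE_I2)
      fix x
      have "(Tu x - \<theta>\<^sub>0 - h k x)\<^sup>2 \<le> 2 * (Tu x - \<theta>\<^sub>0)\<^sup>2 + 2 * (h k x)\<^sup>2"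
        by (rule sq_ineq)
      moreover have "(h k x)\<^sup>2 \<le> B\<^sup>2" using hb[of k x]
        by (rule sq_abs_le)
      ultimately show "norm (f k x) \<le> 2 * (Tu x - \<theta>\<^sub>0)\<^sup>2 + 2 * B\<^sup>2" unfolding f_def by simp
    qed
    show "AE x in M. (\<lambda>k. f k x) \<longlonglongrightarrow> (Tu x - \<theta>\<^sub>0)\<^sup>2"
    proof (intro AE_I2)
      fix x
      define D where "D = Tu x - Tb' x"
      have lim1: "filterlim (\<lambda>k. \<mu> k - D) at_top sequentially"
      proof -
        have eqf: "(\<lambda>k. \<mu> k - D) = (\<lambda>k. -D + \<mu> k)" by (rule ext) simp
        show ?thesis unfolding eqf
          by (rule filterlim_tendsto_add_at_top[OF tendsto_const assms(12)])
      qed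
      have "(\<lambda>k. (\<mu> k - D) / ((\<mu> k - D)\<^sup>2 + s)) \<longlonglongrightarrow> 0"
        using filterlim_compose[OF frac_lim[OF s] lim1] by simp
      hence "(\<lambda>k. h k x) \<longlonglongrightarrow> 0"
      proof -
        assume a: "(\<lambda>k. (\<mu> k - D) / ((\<mu> k - D)\<^sup>2 + s)) \<longlonglongrightarrow> 0"
        have "(\<lambda>k. - c * ((\<mu> k - D) / ((\<mu> k - D)\<^sup>2 + s))) \<longlonglongrightarrow> - c * 0"
          by (intro tendsto_intros a)
        moreover have "h k x = - c * ((\<mu> k - D) / ((\<mu> k - D)\<^sup>2 + s))" for k
        proof -
          have m: "Tu x - Tb' x - \<mu> k = - (\<mu> k - D)" unfolding D_def by simp
          show ?thesis unfolding h_def m power2_minus by (simp only: minus_divide_left[symmetric] mult_minus_right mult_minus_left)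
        qed
        ultimately show ?thesis by simp
      qed
      hence "(\<lambda>k. (Tu x - \<theta>\<^sub>0 - h k x)\<^sup>2) \<longlonglongrightarrow> (Tu x - \<theta>\<^sub>0 - 0)\<^sup>2"
        by (intro tendsto_intros)
      thus "(\<lambda>k. f k x) \<longlonglongrightarrow> (Tu x - \<theta>\<^sub>0)\<^sup>2" unfolding f_def by simp
    qed
  qed
  moreover have "integral\<^sup>L M (\<lambda>x. (Tu x - \<theta>\<^sub>0)\<^sup>2) = \<sigma>u2"
    unfolding assms(2) assms(10) by simp
  ultimately show ?thesis unfolding eq by simp
qed

end
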